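(* Let $M,N\ge 1$ be integers and $0<t_1<t_2<\dots<t_N$. Let $R$ be the $N\times N$ matrix with entries $R_{lm}=\min(t_l,t_m)$, $l,m=1,\dots,N$. Let $\Sigma_{MN}$ be a symmetric positive definite $MN\times MN$ matrix and let $K$ be a symmetric positive definite $M\times M$ matrix. Let $C_{\Sigma_{MN}}$, $C_R$, $C_K$ be the Cholesky factors of $\Sigma_{MN}$, $R$, $K$ respectively (lower triangular with positive diagonal, $A=C_AC_A^T$). Let $R\otimes K=E\Lambda E^T$ be an eigendecomposition with $E$ orthogonal and $\Lambda$ diagonal with positive diagonal entries, and let $\Lambda^{1/2}$ be the diagonal matrix of the square roots of those entries. If $\epsilon$ is an $MN$-dimensional random vector with distribution $N(0,I_{MN})$, then $$\mathbf{Z}=C_{\Sigma_{MN}}\,\big(C_R^{-1}\otimes C_K^{-1}\big)\,E\,\Lambda^{1/2}\,\epsilon$$ has distribution $N(0,\Sigma_{MN})$.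
   Context: $\otimes$ denotes the Kronecker product: for $A\in\mathbb{R}^{m_A\times n_A}$ and $B$, $A\otimes B$ is the block matrix whose $(i,j)$ block is $a_{ij}B$. In the paper's application, $\Sigma_{MN}$ is the global covariance matrix of the sampled multi-asset Brownian log-return vector (with $(l,m)$ block $\Sigma(t_{\min(l,m)})$, where $\Sigma(t)$ has entries $\int_0^t\sigma_i(s)\sigma_k(s)\rho_{ik}\,ds$), and $K$ is chosen to minimize the Frobenius norm $\|\Sigma_{MN}-R\otimes K\|$; this construction ("Kronecker product approximation", KPA) is used to generate sample paths. *)

theory Defs
  imports "HOL-Probability.Probability" "Jordan_Normal_Form.Determinant"
begin

(* Kronecker product: block (i,j) of A \<otimes> B is A$$(i,j) \<cdot> B *)
definition kron :: "real mat \<Rightarrow> real mat \<Rightarrow> real mat" where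
  "kron A B = mat (dim_row A * dim_row B) (dim_col A * dim_col B)
     (\<lambda>(p,q). A $$ (p div dim_row B, q div dim_col B) * B $$ (p mod dim_row B, q mod dim_col B))"

definition minv :: "real mat \<Rightarrow> real mat" where
  "minv A = (SOME B. B \<in> carrier_mat (dim_row A) (dim_row A) \<and> inverts_mat A B \<and> inverts_mat B A)"

definition sym_pos_def :: "nat \<Rightarrow> real mat \<Rightarrow> bool" where
  "sym_pos_def n A \<longleftrightarrow> A \<in> carrier_mat n n \<and> transpose_mat A = A \<and>
     (\<forall>v \<in> carrier_vec n. v \<noteq> 0\<^sub>v n \<longrightarrow> v \<bullet> (A *\<^sub>v v) > 0)"

definition is_cholesky :: "nat \<Rightarrow> real mat \<Rightarrow> real mat \<Rightarrow> bool" where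
  "is_cholesky n C A \<longleftrightarrow> C \<in> carrier_mat n n \<and> (\<forall>i<n. \<forall>j<n. i < j \<longrightarrow> C $$ (i,j) = 0) \<and>
     (\<forall>i<n. C $$ (i,i) > 0) \<and> A = C * transpose_mat C"

definition is_eigendecomp :: "nat \<Rightarrow> real mat \<Rightarrow> real mat \<Rightarrow> real mat \<Rightarrow> bool" where
  "is_eigendecomp n A E \<Lambda> \<longleftrightarrow> E \<in> carrier_mat n n \<and> \<Lambda> \<in> carrier_mat n n \<and>
     transpose_mat E * E = 1\<^sub>m n \<and> diagonal_mat \<Lambda> \<and> (\<forall>i<n. \<Lambda> $$ (i,i) > 0) \<and>
     A = E * \<Lambda> * transpose_mat E"

definition diag_sqrt :: "real mat \<Rightarrow> real mat" where
  "diag_sqrt \<Lambda> = mat (dim_row \<Lambda>) (dim_col \<Lambda>) (\<lambda>(i,j). if i = j then sqrt (\<Lambda> $$ (i,i)) else 0)"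

definition min_mat :: "nat \<Rightarrow> (nat \<Rightarrow> real) \<Rightarrow> real mat" where
  "min_mat N t = mat N N (\<lambda>(l,m). min (t l) (t m))"

(* R^n as extensional functions on {..<n}, with the product Lebesgue-Borel structure *)
abbreviation Rn :: "nat \<Rightarrow> (nat \<Rightarrow> real) measure" where
  "Rn n \<equiv> PiM {..<n} (\<lambda>_. lborel)"

definition mvnormal :: "nat \<Rightarrow> real mat \<Rightarrow> (nat \<Rightarrow> real) measure" where
  "mvnormal n \<Sigma> = density (Rn n) (\<lambda>x. ennreal ((2 * pi) powr (- real n / 2) * det \<Sigma> powr (- 1 / 2)
       * exp (- (vec n x \<bullet> (minv \<Sigma> *\<^sub>v vec n x)) / 2)))"

definition mat_app :: "nat \<Rightarrow> real mat \<Rightarrow> (nat \<Rightarrow> real) \<Rightarrow> (nat \<Rightarrow> real)" where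
  "mat_app n A x = restrict (\<lambda>i. (A *\<^sub>v vec n x) $ i) {..<n}"

end

theory Submission
  imports Defs
begin

interpretation lb: product_sigma_finite "\<lambda>_::nat. lborel :: real measure"
  by (simp add: product_sigma_finite_def lborel.sigma_finite_measure_axioms)

lemma coord_affine:
  fixes n k :: nat and a :: real and b :: "(nat \<Rightarrow> real) \<Rightarrow> real"
  assumes k: "k < n" and a: "a \<noteq> 0" and bm[measurable]: "b \<in> borel_measurable (Rn n)"
   and bk: "\<And>x y. b (x(k:=y)) = b x"
   and f[measurable]: "f \<in> borel_measurable (Rn n)"
  shows "(\<integral>\<^sup>+x. f (x(k := a * x k + b x)) \<partial>Rn n) = ennreal (1/\<bar>a\<bar>) * (\<integral>\<^sup>+x. f x \<partial>Rn n)"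
proof -
  define I where "I = {..<n} - {k}"
  have ins: "{..<n} = insert k I" and kI: "k \<notin> I" and fI: "finite I" using k by (auto simp: I_def)
  have mupd: "(\<lambda>x. x(k := a * x k + b x)) \<in> measurable (Rn n) (Rn n)"
    by (rule measurable_fun_upd[where J="{..<n}"]) (use k in auto)
  have m1: "(\<lambda>x. f (x(k := a * x k + b x))) \<in> borel_measurable (Rn n)"
    using measurable_comp[OF mupd f] by (simp add: o_def)
  have inner: "(\<integral>\<^sup>+y. f (x(k := y)) \<partial>lborel) = ennreal \<bar>a\<bar> * (\<integral>\<^sup>+y. f ((x(k:=y))(k := a * (x(k:=y)) k + b (x(k:=y)))) \<partial>lborel)"
    if x: "x \<in> space (Pi\<^sub>M I (\<lambda>_. lborel))" for x
  proof -
    have gm: "(\<lambda>y. f (x(k := y))) \<in> borel_measurable borel"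
    proof -
      have "(\<lambda>y. x(k := y)) \<in> measurable lborel (Rn n)"
        unfolding ins using measurable_component_update[OF x kI] by simp
      then show ?thesis using measurable_comp[OF _ f] by (simp add: o_def)
    qed
    show ?thesis
      using nn_integral_real_affine[OF gm a, of "b x"] by (simp add: bk add.commute)
  qed
  have "(\<integral>\<^sup>+x. f (x(k := a * x k + b x)) \<partial>Rn n)
      = (\<integral>\<^sup>+ x. (\<integral>\<^sup>+ y. f ((x(k:=y))(k := a * (x(k:=y)) k + b (x(k:=y)))) \<partial>lborel) \<partial>(Pi\<^sub>M I (\<lambda>_. lborel)))"
    unfolding ins by (rule lb.product_nn_integral_insert[OF fI kI]) (use m1 ins in simp)
  also have "\<dots> = (\<integral>\<^sup>+ x. ennreal (1/\<bar>a\<bar>) * (\<integral>\<^sup>+y. f (x(k := y)) \<partial>lborel) \<partial>(Pi\<^sub>M I (\<lambda>_. lborel)))"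
  proof (rule nn_integral_cong)
    fix x :: "nat \<Rightarrow> real" assume x: "x \<in> space (Pi\<^sub>M I (\<lambda>_. lborel))"
    have "ennreal (1/\<bar>a\<bar>) * ennreal \<bar>a\<bar> = 1" using a
      by (simp add: ennreal_mult[symmetric])
    then show "(\<integral>\<^sup>+ y. f ((x(k:=y))(k := a * (x(k:=y)) k + b (x(k:=y)))) \<partial>lborel) = ennreal (1/\<bar>a\<bar>) * (\<integral>\<^sup>+y. f (x(k := y)) \<partial>lborel)"
      unfolding inner[OF x] by (simp add: mult.assoc[symmetric])
  qed
  also have "\<dots> = ennreal (1/\<bar>a\<bar>) * (\<integral>\<^sup>+ x. (\<integral>\<^sup>+y. f (x(k := y)) \<partial>lborel) \<partial>(Pi\<^sub>M I (\<lambda>_. lborel)))"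
  proof (rule nn_integral_cmult)
    have fm[measurable]: "f \<in> borel_measurable (Pi\<^sub>M (insert k I) (\<lambda>_. lborel))" using f ins by simp
    show "(\<lambda>x. \<integral>\<^sup>+y. f (x(k := y)) \<partial>lborel) \<in> borel_measurable (Pi\<^sub>M I (\<lambda>_. lborel))"
      by measurable
  qed
  also have "(\<integral>\<^sup>+ x. (\<integral>\<^sup>+y. f (x(k := y)) \<partial>lborel) \<partial>(Pi\<^sub>M I (\<lambda>_. lborel))) = (\<integral>\<^sup>+x. f x \<partial>Rn n)"
    unfolding ins by (rule lb.product_nn_integral_insert[OF fI kI, symmetric]) (use f ins in simp)
  finally show ?thesis .
qed

lemma mat_app_eq:
  assumes "A \<in> carrier_mat n n"
  shows "mat_app n A x = (\<lambda>i\<in>{..<n}. \<Sum>j<n. A $$ (i,j) * x j)"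
  using assms unfolding mat_app_def
  by (intro ext) (auto simp: scalar_prod_def lessThan_atLeast0 intro!: sum.cong)

lemma mat_app_measurable[measurable]:
  assumes "A \<in> carrier_mat n n"
  shows "mat_app n A \<in> measurable (Rn n) (Rn n)"
  unfolding mat_app_eq[OF assms] by measurable

lemma mat_app_mult:
  assumes "A \<in> carrier_mat n n" "B \<in> carrier_mat n n"
  shows "mat_app n (A * B) x = mat_app n A (mat_app n B x)"
proof -
  have "vec n (mat_app n B x) = B *\<^sub>v vec n x"
    using assms by (intro eq_vecI) (auto simp: mat_app_def)
  then show ?thesis using assms unfolding mat_app_def
    by (simp add: assoc_mult_mat_vec[of A n n B n "vec n x"])
qed

lemma space_Rn: "x \<in> space (Rn n) \<longleftrightarrow> (\<forall>i. i \<notin> {..<n} \<longrightarrow> x i = undefined)"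
  by (auto simp: space_PiM PiE_def extensional_def)

lemma sum_single:
  fixes n :: nat
  assumes "i < n" "\<And>j. j < n \<Longrightarrow> j \<noteq> i \<Longrightarrow> g j = (0::real)"
  shows "(\<Sum>j<n. g j) = g i"
proof -
  have "(\<Sum>j<n. g j) = g i + (\<Sum>j\<in>{..<n}-{i}. g j)"
    using assms(1) by (subst sum.remove[of _ i]) auto
  also have "(\<Sum>j\<in>{..<n}-{i}. g j) = 0" using assms by (intro sum.neutral) auto
  finally show ?thesis by simp
qed

lemma sum_two:
  fixes n :: nat
  assumes "i < n" "l < n" "i \<noteq> l" "\<And>j. j < n \<Longrightarrow> j \<noteq> i \<Longrightarrow> j \<noteq> l \<Longrightarrow> g j = (0::real)"
  shows "(\<Sum>j<n. g j) = g i + g l"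
proof -
  have "(\<Sum>j<n. g j) = g i + (\<Sum>j\<in>{..<n}-{i}. g j)"
    using assms(1) by (subst sum.remove[of _ i]) auto
  also have "(\<Sum>j\<in>{..<n}-{i}. g j) = g l + (\<Sum>j\<in>{..<n}-{i}-{l}. g j)"
    using assms by (subst sum.remove[of _ l]) auto
  also have "(\<Sum>j\<in>{..<n}-{i}-{l}. g j) = 0" using assms by (intro sum.neutral) auto
  finally show ?thesis by simp
qed

lemma mat_app_one: "x \<in> space (Rn n) \<Longrightarrow> mat_app n (1\<^sub>m n) x = x"
  unfolding mat_app_eq[OF one_carrier_mat]
  apply (rule ext)
  subgoal for i
    by (cases "i < n") (auto simp: space_Rn sum_single[of i n])
  done

lemma mat_app_multrow: "x \<in> space (Rn n) \<Longrightarrow> k < n \<Longrightarrow> mat_app n (multrow_mat n k a) x = x(k := a * x k)"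
  unfolding mat_app_eq[OF multrow_mat_carrier]
  apply (rule ext)
  subgoal for i
    by (cases "i < n") (auto simp: space_Rn sum_single[of i n])
  done

lemma mat_app_addrow: "x \<in> space (Rn n) \<Longrightarrow> k < n \<Longrightarrow> l < n \<Longrightarrow> k \<noteq> l \<Longrightarrow>
   mat_app n (addrow_mat n a k l) x = x(k := x k + a * x l)"
  unfolding mat_app_eq[OF addrow_mat_carrier]
  apply (rule ext)
  subgoal for i
    apply (cases "i < n")
     apply (cases "i = k")
      apply (simp add: sum_two[of k n l])
     apply (simp add: sum_single[of i n])
    apply (auto simp: space_Rn)
    done
  done


definition good :: "nat \<Rightarrow> real mat \<Rightarrow> bool" where
  "good n P \<longleftrightarrow> P \<in> carrier_mat n n \<and> det P \<noteq> 0 \<and>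
     (\<forall>f\<in>borel_measurable (Rn n). (\<integral>\<^sup>+x. f (mat_app n P x) \<partial>Rn n) = ennreal (1/\<bar>det P\<bar>) * (\<integral>\<^sup>+x. f x \<partial>Rn n))"

lemma good_one: "good n (1\<^sub>m n)"
  unfolding good_def by (auto simp: mat_app_one intro!: nn_integral_cong)

lemma good_mult:
  assumes A: "good n A" and B: "good n B"
  shows "good n (A * B)"
proof -
  have Ac: "A \<in> carrier_mat n n" and Bc: "B \<in> carrier_mat n n" and dA: "det A \<noteq> 0" and dB: "det B \<noteq> 0"
    using A B by (auto simp: good_def)
  have "(\<integral>\<^sup>+x. f (mat_app n (A * B) x) \<partial>Rn n) = ennreal (1/\<bar>det (A * B)\<bar>) * (\<integral>\<^sup>+x. f x \<partial>Rn n)"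
    if f[measurable]: "f \<in> borel_measurable (Rn n)" for f
  proof -
    have fA: "(\<lambda>x. f (mat_app n A x)) \<in> borel_measurable (Rn n)"
      using measurable_comp[OF mat_app_measurable[OF Ac] f] by (simp add: o_def)
    have "(\<integral>\<^sup>+x. f (mat_app n (A * B) x) \<partial>Rn n) = (\<integral>\<^sup>+x. (\<lambda>y. f (mat_app n A y)) (mat_app n B x) \<partial>Rn n)"
      by (simp add: mat_app_mult[OF Ac Bc])
    also have "\<dots> = ennreal (1/\<bar>det B\<bar>) * (\<integral>\<^sup>+x. f (mat_app n A x) \<partial>Rn n)"
      using B fA unfolding good_def by (auto dest!: bspec[of _ _ "\<lambda>y. f (mat_app n A y)"])
    also have "\<dots> = ennreal (1/\<bar>det B\<bar>) * (ennreal (1/\<bar>det A\<bar>) * (\<integral>\<^sup>+x. f x \<partial>Rn n))"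
      using A f unfolding good_def by simp
    also have "\<dots> = ennreal (1/\<bar>det (A * B)\<bar>) * (\<integral>\<^sup>+x. f x \<partial>Rn n)"
      by (simp add: det_mult[OF Ac Bc] mult.assoc[symmetric] ennreal_mult[symmetric] abs_mult mult.commute)
    finally show ?thesis .
  qed
  then show ?thesis using Ac Bc dA dB by (auto simp: good_def det_mult[OF Ac Bc])
qed

lemma good_cong:
  assumes A: "good n A" and B: "B \<in> carrier_mat n n" and d: "\<bar>det B\<bar> = \<bar>det A\<bar>"
    and eq: "\<And>x. x \<in> space (Rn n) \<Longrightarrow> mat_app n B x = mat_app n A x"
  shows "good n B"
  using A B d unfolding good_def
  by (auto simp: eq cong: nn_integral_cong)

lemma good_multrow:
  assumes k: "k < n" and a: "a \<noteq> 0"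
  shows "good n (multrow_mat n k a)"
  unfolding good_def
proof (intro conjI ballI)
  show "multrow_mat n k a \<in> carrier_mat n n" by simp
  show "det (multrow_mat n k a) \<noteq> 0" using det_multrow_mat[of k n a] k a by simp
  fix f :: "(nat \<Rightarrow> real) \<Rightarrow> ennreal" assume f: "f \<in> borel_measurable (Rn n)"
  have "(\<integral>\<^sup>+x. f (mat_app n (multrow_mat n k a) x) \<partial>Rn n) = (\<integral>\<^sup>+x. f (x(k := a * x k + (\<lambda>_. 0) x)) \<partial>Rn n)"
    by (rule nn_integral_cong) (simp add: mat_app_multrow k)
  also have "\<dots> = ennreal (1/\<bar>a\<bar>) * (\<integral>\<^sup>+x. f x \<partial>Rn n)"
    by (rule coord_affine[OF k a _ _ f]) auto
  finally show "(\<integral>\<^sup>+x. f (mat_app n (multrow_mat n k a) x) \<partial>Rn n) = ennreal (1/\<bar>det (multrow_mat n k a)\<bar>) * (\<integral>\<^sup>+x. f x \<partial>Rn n)"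
    using det_multrow_mat[of k n a] k by simp
qed

lemma good_addrow:
  assumes k: "k < n" and l: "l < n" and kl: "k \<noteq> l"
  shows "good n (addrow_mat n a k l)"
  unfolding good_def
proof (intro conjI ballI)
  show "addrow_mat n a k l \<in> carrier_mat n n" by simp
  show "det (addrow_mat n a k l) \<noteq> 0" using det_addrow_mat[of k l n a] kl by simp
  fix f :: "(nat \<Rightarrow> real) \<Rightarrow> ennreal" assume f: "f \<in> borel_measurable (Rn n)"
  have "(\<integral>\<^sup>+x. f (mat_app n (addrow_mat n a k l) x) \<partial>Rn n) = (\<integral>\<^sup>+x. f (x(k := 1 * x k + (\<lambda>x. a * x l) x)) \<partial>Rn n)"
    by (rule nn_integral_cong) (simp add: mat_app_addrow k l kl)
  also have "\<dots> = ennreal (1/\<bar>1\<bar>) * (\<integral>\<^sup>+x. f x \<partial>Rn n)"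
    by (rule coord_affine[OF k _ _ _ f]) (use l kl in auto)
  finally show "(\<integral>\<^sup>+x. f (mat_app n (addrow_mat n a k l) x) \<partial>Rn n) = ennreal (1/\<bar>det (addrow_mat n a k l)\<bar>) * (\<integral>\<^sup>+x. f x \<partial>Rn n)"
    using det_addrow_mat[of k l n a] kl by simp
qed

lemma good_swaprows:
  assumes k: "k < n" and l: "l < n"
  shows "good n (swaprows_mat n k l)"
proof (cases "k = l")
  case True
  have "swaprows_mat n k l = (1\<^sub>m n :: real mat)" using True by (intro eq_matI) auto
  then show ?thesis using good_one by simp
next
  case kl: False
  define P1 :: "real mat" where "P1 = addrow_mat n 1 k l"
  define P2 :: "real mat" where "P2 = addrow_mat n (-1) l k"
  define P4 :: "real mat" where "P4 = multrow_mat n l (-1::real)"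
  have c: "P1 \<in> carrier_mat n n" "P2 \<in> carrier_mat n n" "P4 \<in> carrier_mat n n"
    by (auto simp: P1_def P2_def P4_def)
  have g: "good n (P4 * (P1 * (P2 * P1)))"
    unfolding P1_def P2_def P4_def
    by (intro good_mult good_addrow good_multrow) (use k l kl in auto)
  show ?thesis
  proof (rule good_cong[OF g])
    show "swaprows_mat n k l \<in> carrier_mat n n" by simp
    have "det (P4 * (P1 * (P2 * P1))) = -1"
    proof -
      have d: "det P1 = 1" "det P2 = 1" "det P4 = -1"
        using det_addrow_mat[of k l n 1] det_addrow_mat[of l k n "-1"] det_multrow_mat[of l n "-1::real"] k l kl
        by (auto simp: P1_def P2_def P4_def)
      have "det (P4 * (P1 * (P2 * P1))) = det P4 * (det P1 * (det P2 * det P1))"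
        using c by (simp add: det_mult[of _ n])
      then show ?thesis using d by simp
    qed
    then show "\<bar>det (swaprows_mat n k l)\<bar> = \<bar>det (P4 * (P1 * (P2 * P1)))\<bar>"
      using det_swaprows_mat[OF k l kl, where 'a=real] by simp
    fix x assume x: "x \<in> space (Rn n)"
    have sp: "\<And>A y. A \<in> carrier_mat n n \<Longrightarrow> mat_app n A y \<in> space (Rn n)"
      by (auto simp: mat_app_def space_Rn)
    have "mat_app n (P4 * (P1 * (P2 * P1))) x = mat_app n P4 (mat_app n P1 (mat_app n P2 (mat_app n P1 x)))"
      using c by (simp add: mat_app_mult)
    also have "\<dots> = x(k := x l, l := x k)"
    proof -
      have e1: "mat_app n P1 x = x(k := x k + x l)" using x k l kl by (simp add: P1_def mat_app_addrow)
      have s1: "mat_app n P1 x \<in> space (Rn n)" using sp c by auto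
      have e2: "mat_app n P2 (mat_app n P1 x) = x(k := x k + x l, l := - x k)"
        using s1 k l kl unfolding e1 by (simp add: P2_def mat_app_addrow)
      have s2: "mat_app n P2 (mat_app n P1 x) \<in> space (Rn n)" using sp c by auto
      have e3: "mat_app n P1 (mat_app n P2 (mat_app n P1 x)) = x(k := x l, l := - x k)"
        using s2 k l kl unfolding e2 by (simp add: P1_def mat_app_addrow fun_upd_twist)
      have s3: "mat_app n P1 (mat_app n P2 (mat_app n P1 x)) \<in> space (Rn n)" using sp c by auto
      show ?thesis
        using s3 k l kl unfolding e3 by (auto simp: P4_def mat_app_multrow fun_upd_twist)
    qed
    also have "\<dots> = mat_app n (swaprows_mat n k l) x"
      unfolding mat_app_eq[OF swaprows_mat_carrier]
      apply (rule ext)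
      subgoal for i
        using x k l kl
        by (cases "i < n") (auto simp: space_Rn sum_single[of i n] sum_single[of k n] sum_single[of l n])
      done
    finally show "mat_app n (swaprows_mat n k l) x = mat_app n (P4 * (P1 * (P2 * P1))) x" by simp
  qed
qed


lemma good_prod_eliminate_entries: "i < nr \<Longrightarrow> (\<And> a i'. (a, i') \<in> set is \<Longrightarrow> i' < nr \<and> i' \<noteq> i)
  \<Longrightarrow> \<exists> P. good nr P \<and> (\<forall> B nc. B \<in> carrier_mat nr nc \<longrightarrow> eliminate_entries_rec B i is = P * B)"
proof (induct "is")
  case Nil
  thus ?case by (intro exI[of _ "1\<^sub>m nr"], auto simp: good_one)
next
  case (Cons ai' "is")
  obtain a i' where ai': "ai' = (a,i')" by force
  from Cons(1)[OF Cons(2-3)]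
  obtain P where P: "good nr P" and id: "\<And> B nc . B \<in> carrier_mat nr nc \<Longrightarrow>
    eliminate_entries_rec B i is = P * B" by force
  let ?Add = "addrow_mat nr a i' i"
  have Add: "good nr ?Add"
    by (rule good_addrow, insert Cons ai', auto)
  have PI: "good nr (P * ?Add)" by (rule good_mult[OF P Add])
  from P have P: "P \<in> carrier_mat nr nr" unfolding good_def by simp
  show ?case
  proof (rule exI[of _ "P * ?Add"], intro conjI PI allI impI)
    fix B :: "real mat" and nc
    assume BB: "B \<in> carrier_mat nr nc"
    let ?B = "addrow a i' i B"
    from BB have B: "?B \<in> carrier_mat nr nc" by simp
    from id[OF B] have id: "eliminate_entries_rec ?B i is = P * ?B" .
    have id2: "eliminate_entries_rec B i (ai' # is) = eliminate_entries_rec ?B i is" unfolding ai' by simp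
    show "eliminate_entries_rec B i (ai' # is) = P * ?Add * B"
      unfolding id2 id unfolding addrow_mat[OF BB Cons(2)]
      by (rule assoc_mult_mat[symmetric, OF P _ BB], auto)
  qed
qed

lemma good_gauss_jordan_transform: assumes A: "A \<in> carrier_mat nr nc" and B: "B \<in> carrier_mat nr nc'"
  and res: "gauss_jordan (A :: real mat) B = (A',B')"
  shows "\<exists> P. good nr P \<and> A' = P * A \<and> B' = P * B"
proof -
  {
    fix i j :: nat
    assume "gauss_jordan_main A B i j = (A',B')"
    with A B
    have "\<exists> P. good nr P \<and> A' = P * A \<and> B' = P * B"
    proof (induction A B i j rule: gauss_jordan_main.induct)
      case (1 A B i j)
      note A = 1(5)
      hence dim: "dim_row A = nr" "dim_col A = nc" by auto
      note B = 1(6)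
      hence dimB: "dim_row B = nr" "dim_col B = nc'" by auto
      note IH = 1(1-4)[OF dim[symmetric]]
      note res = 1(7)
      note simp = gauss_jordan_main.simps[of A B i j] Let_def
      show ?case
      proof (cases "i < nr \<and> j < nc")
        case False
        with res have res: "A' = A" "B' = B" unfolding simp dim by auto
        show ?thesis unfolding res
          by (rule exI[of _ "1\<^sub>m nr"], insert A B, auto simp: good_one)
      next
        case True note valid = this
        note IH = IH[OF valid refl]
        show ?thesis
        proof (cases "A $$ (i,j) = 0")
          case False note nZ = this
          note IH = IH(3-4)[OF nZ]
          show ?thesis
          proof (cases "A $$ (i,j) = 1")
            case False note nO = this
            let ?inv = "inverse (A $$ (i,j))"
            from nO nZ valid res
            have "gauss_jordan_main (multrow i ?inv A) (multrow i ?inv B) i j = (A',B')"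
              unfolding simp dim by simp
            note IH = IH(2)[OF nO refl, unfolded multrow_carrier, OF A B this]
            from IH obtain P where P: "good nr P" and
              id: "A' = P * multrow i ?inv A" "B' = P * multrow i ?inv B" by blast
            let ?Inv = "multrow_mat nr i ?inv"
            from nZ valid have "i < nr" "?inv \<noteq> 0" by auto
            from good_multrow[OF this]
            have Inv: "good nr ?Inv" .
            from good_mult[OF P Inv] have PI: "good nr (P * ?Inv)" .
            from P have P: "P \<in> carrier_mat nr nr" unfolding good_def by simp
            show ?thesis unfolding id unfolding multrow_mat[OF A] multrow_mat[OF B]
              by (rule exI[of _ "P * ?Inv"], intro conjI PI,
                rule assoc_mult_mat[symmetric, OF P _ A], simp,
                rule assoc_mult_mat[symmetric, OF P _ B], simp)
          next
            case True note O = this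
            let ?is = "filter (\<lambda> i'. i' \<noteq> i) [0 ..< nr]"
            let ?ais = "map (\<lambda> i'. (-A $$ (i',j), i')) ?is"
            let ?E = "\<lambda> B. eliminate_entries (\<lambda> i. A $$ (i,j)) B i j"
            let ?EE = "\<lambda> B. eliminate_entries_rec B i ?ais"
            let ?A = "?E A"
            let ?B = "?E B"
            from O nZ valid res have "gauss_jordan_main ?A ?B (Suc i) (Suc j) = (A',B')"
              unfolding simp dim by simp
            note IH = IH(1)[OF O refl carrier_eliminate_entries(1)[OF A] carrier_eliminate_entries(1)[OF B] this]
            from IH obtain P where P: "good nr P" and id: "A' = P * ?A" "B' = P * ?B" by blast
            have *: "j < dim_col A" "i < dim_row A" by (auto simp add: dim valid)
            have "\<exists>P. good nr P \<and> (\<forall> B nc. B \<in> carrier_mat nr nc \<longrightarrow> ?EE B = P * B)"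
              by (rule good_prod_eliminate_entries, insert valid, auto)
            then obtain Q where Q: "good nr Q" and QQ: "\<And> B nc. B \<in> carrier_mat nr nc \<Longrightarrow> ?EE B = Q * B" by auto
            {
              fix B :: "real mat" and nc
              assume B: "B \<in> carrier_mat nr nc"
              with dim have "dim_row B = dim_row A" by auto
              from eliminate_entries_convert[OF * this]
              have "?E B = ?EE B" using dim by simp
              also have "\<dots> = Q * B" using QQ[OF B] by simp
              finally have "?E B = Q * B" .
            } note QQ = this
            have id3: "?A = Q * A" by (rule QQ[OF A])
            have id4: "?B = Q * B" by (rule QQ[OF B])
            from good_mult[OF P Q] have PQ: "good nr (P * Q)" .
            from P have Pc: "P \<in> carrier_mat nr nr" unfolding good_def by simp
            from Q have Qc: "Q \<in> carrier_mat nr nr" unfolding good_def by simp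
            show ?thesis unfolding id unfolding id3 id4
              by (rule exI[of _ "P * Q"], intro conjI PQ,
              rule assoc_mult_mat[symmetric, OF Pc Qc A],
              rule assoc_mult_mat[symmetric, OF Pc Qc B])
          qed
        next
          case True note Z = this
          note IH = IH(1-2)[OF Z]
          let ?is = "[ i' . i' <- [Suc i ..< nr],  A $$ (i',j) \<noteq> 0]"
          show ?thesis
          proof (cases ?is)
            case Nil
            from Z valid res have id: "gauss_jordan_main A B i (Suc j) = (A',B')" unfolding simp dim Nil by simp
            from IH(1)[OF Nil A B this] show ?thesis .
          next
            case (Cons i' iis)
            from Z valid res have "gauss_jordan_main (swaprows i i' A) (swaprows i i' B) i j = (A',B')"
              unfolding simp dim Cons by simp
            from IH(2)[OF Cons, unfolded swaprows_carrier, OF A B this]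
            obtain P where P: "good nr P" and
              id: "A' = P * swaprows i i' A" "B' = P * swaprows i i' B" by blast
            let ?Swap = "swaprows_mat nr i i'"
            from Cons have "i' \<in> set ?is" by auto
            with valid have i': "i < nr" "i' < nr" by auto
            from good_swaprows[OF this] have Swap: "good nr ?Swap" .
            from good_mult[OF P Swap] have PI: "good nr (P * ?Swap)" .
            from P have P: "P \<in> carrier_mat nr nr" unfolding good_def by simp
            show ?thesis unfolding id swaprows_mat[OF A i'] swaprows_mat[OF B i']
              by (rule exI[of _ "P * ?Swap"], intro conjI PI,
              rule assoc_mult_mat[symmetric, OF P _ A], simp,
              rule assoc_mult_mat[symmetric, OF P _ B], simp)
          qed
        qed
      qed
    qed
  }
  from this[of 0 0, folded gauss_jordan_def, OF res] show ?thesis .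
qed

lemma change_of_vars:
  assumes A: "A \<in> carrier_mat n n" and dA: "det A \<noteq> 0"
    and f: "f \<in> borel_measurable (Rn n)"
  shows "(\<integral>\<^sup>+x. f (mat_app n A x) \<partial>Rn n) = ennreal (1/\<bar>det A\<bar>) * (\<integral>\<^sup>+x. f x \<partial>Rn n)"
proof -
  obtain A' B' where res: "gauss_jordan A (1\<^sub>m n) = (A', B')" by force
  have "A \<in> Units (ring_mat TYPE(real) n undefined)" by (rule det_non_zero_imp_unit[OF A dA])
  from gauss_jordan_inverse_other_direction[OF this one_carrier_mat] res have A': "A' = 1\<^sub>m n" by simp
  from good_gauss_jordan_transform[OF A one_carrier_mat res] obtain P where
    P: "good n P" and PA: "A' = P * A" by blast
  have Pc: "P \<in> carrier_mat n n" and dP: "det P \<noteq> 0" using P by (auto simp: good_def)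
  have PA1: "P * A = 1\<^sub>m n" using A' PA by simp
  have AP1: "A * P = 1\<^sub>m n" by (rule mat_mult_left_right_inverse[OF Pc A PA1])
  have dd: "det P * det A = 1" using det_mult[OF Pc A] PA1 by simp
  have fA: "(\<lambda>x. f (mat_app n A x)) \<in> borel_measurable (Rn n)"
    using measurable_comp[OF mat_app_measurable[OF A] f] by (simp add: o_def)
  have "(\<integral>\<^sup>+x. (\<lambda>y. f (mat_app n A y)) (mat_app n P x) \<partial>Rn n) = ennreal (1/\<bar>det P\<bar>) * (\<integral>\<^sup>+x. f (mat_app n A x) \<partial>Rn n)"
    using P fA unfolding good_def by (auto dest!: bspec[of _ _ "\<lambda>y. f (mat_app n A y)"])
  moreover have "(\<integral>\<^sup>+x. (\<lambda>y. f (mat_app n A y)) (mat_app n P x) \<partial>Rn n) = (\<integral>\<^sup>+x. f x \<partial>Rn n)"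
    by (rule nn_integral_cong) (simp add: mat_app_mult[OF A Pc, symmetric] AP1 mat_app_one)
  ultimately have eq: "(\<integral>\<^sup>+x. f x \<partial>Rn n) = ennreal (1/\<bar>det P\<bar>) * (\<integral>\<^sup>+x. f (mat_app n A x) \<partial>Rn n)" by simp
  have "ennreal (1/\<bar>det A\<bar>) * (\<integral>\<^sup>+x. f x \<partial>Rn n) = (ennreal (1/\<bar>det A\<bar>) * ennreal (1/\<bar>det P\<bar>)) * (\<integral>\<^sup>+x. f (mat_app n A x) \<partial>Rn n)"
    unfolding eq by (simp add: mult.assoc)
  also have "ennreal (1/\<bar>det A\<bar>) * ennreal (1/\<bar>det P\<bar>) = 1"
  proof -
    have "\<bar>det A\<bar> * \<bar>det P\<bar> = 1" using dd by (simp add: abs_mult[symmetric] mult.commute)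
    then show ?thesis by (simp add: ennreal_mult[symmetric])
  qed
  finally show ?thesis by simp
qed



lemma sum_div_mod:
  fixes g :: "nat \<Rightarrow> nat \<Rightarrow> real"
  shows "(\<Sum>r\<in>{0..<b*d}. g (r div d) (r mod d)) = (\<Sum>i\<in>{0..<b}. \<Sum>j\<in>{0..<d}. g i j)"
proof (induction b)
  case 0 then show ?case by simp
next
  case (Suc b)
  have "{0..<Suc b * d} = {0..<b*d} \<union> {b*d..<b*d+d}" by auto
  then have "(\<Sum>r\<in>{0..<Suc b*d}. g (r div d) (r mod d)) = (\<Sum>r\<in>{0..<b*d}. g (r div d) (r mod d)) + (\<Sum>r\<in>{b*d..<b*d+d}. g (r div d) (r mod d))"
    by (simp add: sum.union_disjoint)
  also have "(\<Sum>r\<in>{b*d..<b*d+d}. g (r div d) (r mod d)) = (\<Sum>j\<in>{0..<d}. g ((b*d + j) div d) ((b*d+j) mod d))"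
    by (rule sum.reindex_bij_witness[of _ "\<lambda>j. b*d + j" "\<lambda>r. r - b*d"]) auto
  also have "\<dots> = (\<Sum>j\<in>{0..<d}. g b j)"
    by (rule sum.cong) auto
  finally show ?case using Suc by simp
qed

lemma kron_carrier: "A \<in> carrier_mat a b \<Longrightarrow> B \<in> carrier_mat c d \<Longrightarrow> kron A B \<in> carrier_mat (a*c) (b*d)"
  unfolding kron_def by auto

lemma kron_index: "p < dim_row A * dim_row B \<Longrightarrow> q < dim_col A * dim_col B \<Longrightarrow>
   kron A B $$ (p,q) = A $$ (p div dim_row B, q div dim_col B) * B $$ (p mod dim_row B, q mod dim_col B)"
  unfolding kron_def by simp

lemma kron_dims[simp]: "dim_row (kron A B) = dim_row A * dim_row B" "dim_col (kron A B) = dim_col A * dim_col B"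
  unfolding kron_def by auto

lemma div_lt_mult: "(p::nat) < a * c \<Longrightarrow> p div c < a"
  by (simp add: less_mult_imp_div_less)

lemma mod_lt_mult: "(p::nat) < a * c \<Longrightarrow> p mod c < c"
  by (cases "c = 0") auto

lemma kron_mult:
  assumes A: "A \<in> carrier_mat a b" and B: "B \<in> carrier_mat c d" and C: "C \<in> carrier_mat b e" and D: "D \<in> carrier_mat d f"
  shows "kron A B * kron C D = kron (A * C) (B * D)"
proof (rule eq_matI)
  fix p q assume p: "p < dim_row (kron (A * C) (B * D))" and q: "q < dim_col (kron (A * C) (B * D))"
  have p': "p < a * c" and q': "q < e * f" using p q A B C D by auto
  have "(kron A B * kron C D) $$ (p,q) = (\<Sum>r\<in>{0..<b*d}. kron A B $$ (p, r) * kron C D $$ (r, q))"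
    using p' q' A B C D by (simp add: scalar_prod_def)
  also have "\<dots> = (\<Sum>r\<in>{0..<b*d}. (\<lambda>i j. (A $$ (p div c, i) * C $$ (i, q div f)) * (B $$ (p mod c, j) * D $$ (j, q mod f))) (r div d) (r mod d))"
    using p' q' A B C D by (intro sum.cong) (auto simp: kron_index algebra_simps div_lt_mult mod_lt_mult)
  also have "\<dots> = (\<Sum>i\<in>{0..<b}. \<Sum>j\<in>{0..<d}. (A $$ (p div c, i) * C $$ (i, q div f)) * (B $$ (p mod c, j) * D $$ (j, q mod f)))"
    by (rule sum_div_mod)
  also have "\<dots> = (\<Sum>i\<in>{0..<b}. A $$ (p div c, i) * C $$ (i, q div f)) * (\<Sum>j\<in>{0..<d}. B $$ (p mod c, j) * D $$ (j, q mod f))"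
    by (simp add: sum_product)
  also have "\<dots> = kron (A * C) (B * D) $$ (p,q)"
    using p' q' A B C D by (simp add: kron_index scalar_prod_def div_lt_mult mod_lt_mult)
  finally show "(kron A B * kron C D) $$ (p,q) = kron (A * C) (B * D) $$ (p,q)" .
qed (use A B C D in auto)

lemma kron_transpose: "transpose_mat (kron A B) = kron (transpose_mat A) (transpose_mat B)"
  by (rule eq_matI) (auto simp: kron_index div_lt_mult mod_lt_mult)

lemma kron_one: "kron (1\<^sub>m a) (1\<^sub>m b) = (1\<^sub>m (a*b) :: real mat)"
proof (rule eq_matI)
  fix p q assume "p < dim_row (1\<^sub>m (a * b) :: real mat)" "q < dim_col (1\<^sub>m (a * b) :: real mat)"
  then have p: "p < a * b" and q: "q < a * b" by auto
  have eq: "(p div b = q div b \<and> p mod b = q mod b) = (p = q)"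
    by (metis div_mult_mod_eq)
  show "kron (1\<^sub>m a) (1\<^sub>m b) $$ (p, q) = (1\<^sub>m (a*b) :: real mat) $$ (p, q)"
    using p q eq by (auto simp: kron_index div_lt_mult mod_lt_mult)
qed auto


lemma inv_exists:
  assumes A: "(A :: real mat) \<in> carrier_mat n n" and d: "det A \<noteq> 0"
  shows "\<exists>B. B \<in> carrier_mat n n \<and> A * B = 1\<^sub>m n \<and> B * A = 1\<^sub>m n"
  using det_non_zero_imp_unit[OF A d, of undefined] unfolding Units_def ring_mat_def
  by auto

lemma minv_eq:
  assumes A: "(A :: real mat) \<in> carrier_mat n n" and B: "B \<in> carrier_mat n n"
    and AB: "A * B = 1\<^sub>m n" and BA: "B * A = 1\<^sub>m n"
  shows "minv A = B"
proof -
  have ex: "\<exists>B. B \<in> carrier_mat (dim_row A) (dim_row A) \<and> inverts_mat A B \<and> inverts_mat B A"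
    using A B AB BA by (intro exI[of _ B]) (auto simp: inverts_mat_def)
  define B' where "B' = minv A"
  have B': "B' \<in> carrier_mat n n" "A * B' = 1\<^sub>m n" "B' * A = 1\<^sub>m n"
    using someI_ex[OF ex] A unfolding B'_def minv_def inverts_mat_def by auto
  have 1: "B' * (A * B) = B'" using AB B'(1) by simp
  have 2: "B' * (A * B) = (B' * A) * B" using A B B'(1) by simp
  have 3: "(B' * A) * B = B" using B'(3) B by simp
  have "B' = B" using 1 2 3 by simp
  then show ?thesis unfolding B'_def .
qed

lemma chol_det:
  assumes "is_cholesky n C A"
  shows "det C > 0"
proof -
  have C: "C \<in> carrier_mat n n" and lt: "\<And>i j. i < j \<Longrightarrow> j < n \<Longrightarrow> C $$ (i,j) = 0"
    and pos: "\<And>i. i < n \<Longrightarrow> C $$ (i,i) > 0"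
    using assms unfolding is_cholesky_def by auto
  have "det C = prod_list (diag_mat C)" by (rule det_lower_triangular[OF lt C])
  also have "\<dots> = (\<Prod>i = 0..<n. C $$ (i,i))" using C by (simp add: prod_list_diag_prod)
  also have "\<dots> > 0" using pos by (intro prod_pos) auto
  finally show ?thesis .
qed

lemma chol_inv:
  assumes "is_cholesky n C A"
  shows "minv C \<in> carrier_mat n n" "minv C * C = 1\<^sub>m n" "C * minv C = 1\<^sub>m n"
proof -
  have C: "C \<in> carrier_mat n n" using assms unfolding is_cholesky_def by auto
  obtain B where B: "B \<in> carrier_mat n n" "C * B = 1\<^sub>m n" "B * C = 1\<^sub>m n"
    using inv_exists[OF C] chol_det[OF assms] by force
  have "minv C = B" by (rule minv_eq[OF C B])
  then show "minv C \<in> carrier_mat n n" "minv C * C = 1\<^sub>m n" "C * minv C = 1\<^sub>m n" using B by auto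
qed

lemma chol_sandwich:
  assumes "is_cholesky n C A"
  shows "minv C * A * transpose_mat (minv C) = 1\<^sub>m n"
proof -
  have C: "C \<in> carrier_mat n n" and A: "A = C * transpose_mat C" using assms unfolding is_cholesky_def by auto
  note i = chol_inv[OF assms]
  have "minv C * A * transpose_mat (minv C) = (minv C * C) * (transpose_mat (minv C * C))"
    using C i(1) unfolding A
    by (simp add: transpose_mult[of _ n n _ n] assoc_mult_mat[of _ n n _ n _ n])
  also have "\<dots> = 1\<^sub>m n" using i(2) by simp
  finally show ?thesis .
qed

lemma diag_sqrt_sq:
  assumes L: "L \<in> carrier_mat n n" and dg: "diagonal_mat L" and pos: "\<And>i. i < n \<Longrightarrow> L $$ (i,i) > 0"
  shows "diag_sqrt L * transpose_mat (diag_sqrt L) = L" "diag_sqrt L \<in> carrier_mat n n"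
proof -
  show D: "diag_sqrt L \<in> carrier_mat n n" using L unfolding diag_sqrt_def by auto
  show "diag_sqrt L * transpose_mat (diag_sqrt L) = L"
  proof (rule eq_matI)
    fix i j assume i: "i < dim_row L" and j: "j < dim_col L"
    have i': "i < n" and j': "j < n" using i j L by auto
    have "(diag_sqrt L * transpose_mat (diag_sqrt L)) $$ (i,j) =
       (\<Sum>k\<in>{0..<n}. diag_sqrt L $$ (i,k) * diag_sqrt L $$ (j,k))"
      using i' j' L D by (simp add: scalar_prod_def)
    also have "\<dots> = diag_sqrt L $$ (i,i) * diag_sqrt L $$ (j,i)"
    proof -
      have "(\<Sum>k\<in>{0..<n}. diag_sqrt L $$ (i,k) * diag_sqrt L $$ (j,k)) =
         diag_sqrt L $$ (i,i) * diag_sqrt L $$ (j,i) + (\<Sum>k\<in>{0..<n}-{i}. diag_sqrt L $$ (i,k) * diag_sqrt L $$ (j,k))"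
        using i' by (subst sum.remove[of _ i]) auto
      also have "(\<Sum>k\<in>{0..<n}-{i}. diag_sqrt L $$ (i,k) * diag_sqrt L $$ (j,k)) = 0"
        using i' j' L by (intro sum.neutral) (auto simp: diag_sqrt_def)
      finally show ?thesis by simp
    qed
    also have "\<dots> = L $$ (i,j)"
      using i' j' L dg pos[OF i'] unfolding diag_sqrt_def diagonal_mat_def
      by (auto simp: less_imp_le)
    finally show "(diag_sqrt L * transpose_mat (diag_sqrt L)) $$ (i,j) = L $$ (i,j)" .
  qed (use L D in auto)
qed


lemma main_alg:
  fixes M N :: nat and R \<Sigma> K C\<^sub>\<Sigma> C\<^sub>R C\<^sub>K E \<Lambda> :: "real mat"
  assumes cS: "is_cholesky (M * N) C\<^sub>\<Sigma> \<Sigma>"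
    and cR: "is_cholesky N C\<^sub>R R"
    and cK: "is_cholesky M C\<^sub>K K"
    and eig: "is_eigendecomp (N * M) (kron R K) E \<Lambda>"
  defines "A \<equiv> C\<^sub>\<Sigma> * kron (minv C\<^sub>R) (minv C\<^sub>K) * E * diag_sqrt \<Lambda>"
  shows "A \<in> carrier_mat (M*N) (M*N)" "A * transpose_mat A = \<Sigma>"
proof -
  define n where "n = M * N"
  have nn: "N * M = n" by (simp add: n_def)
  have CS: "C\<^sub>\<Sigma> \<in> carrier_mat n n" and S: "\<Sigma> = C\<^sub>\<Sigma> * transpose_mat C\<^sub>\<Sigma>" using cS by (auto simp: is_cholesky_def n_def)
  have CR: "C\<^sub>R \<in> carrier_mat N N" and R: "R = C\<^sub>R * transpose_mat C\<^sub>R" using cR by (auto simp: is_cholesky_def)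
  have CK: "C\<^sub>K \<in> carrier_mat M M" and K: "K = C\<^sub>K * transpose_mat C\<^sub>K" using cK by (auto simp: is_cholesky_def)
  have Rc: "R \<in> carrier_mat N N" using CR R by simp
  have Kc: "K \<in> carrier_mat M M" using CK K by simp
  have E: "E \<in> carrier_mat n n" and L: "\<Lambda> \<in> carrier_mat n n" and EL: "kron R K = E * \<Lambda> * transpose_mat E"
    and dg: "diagonal_mat \<Lambda>" and pos: "\<And>i. i < n \<Longrightarrow> \<Lambda> $$ (i,i) > 0"
    using eig unfolding is_eigendecomp_def nn by auto
  note D = diag_sqrt_sq[OF L dg pos]
  note iR = chol_inv[OF cR] and iK = chol_inv[OF cK]
  define Kp where "Kp = kron (minv C\<^sub>R) (minv C\<^sub>K)"
  have Kp: "Kp \<in> carrier_mat n n" unfolding Kp_def using kron_carrier[OF iR(1) iK(1)] nn by simp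
  have KpT: "transpose_mat Kp = kron (transpose_mat (minv C\<^sub>R)) (transpose_mat (minv C\<^sub>K))"
    unfolding Kp_def by (rule kron_transpose)
  have sand: "Kp * kron R K * transpose_mat Kp = 1\<^sub>m n"
  proof -
    have "Kp * kron R K = kron (minv C\<^sub>R * R) (minv C\<^sub>K * K)"
      unfolding Kp_def by (rule kron_mult[OF iR(1) iK(1) Rc Kc])
    also have "\<dots> * transpose_mat Kp = kron (minv C\<^sub>R * R * transpose_mat (minv C\<^sub>R)) (minv C\<^sub>K * K * transpose_mat (minv C\<^sub>K))"
      unfolding KpT
      by (rule kron_mult[of _ N N _ M M]) (use iR(1) iK(1) Rc Kc in auto)
    also have "\<dots> = kron (1\<^sub>m N) (1\<^sub>m M)" using chol_sandwich[OF cR] chol_sandwich[OF cK] by simp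
    also have "\<dots> = 1\<^sub>m n" using kron_one nn by simp
    finally show ?thesis .
  qed
  define Dq where "Dq = diag_sqrt \<Lambda>"
  have Dq: "Dq \<in> carrier_mat n n" "Dq * transpose_mat Dq = \<Lambda>" using D by (auto simp: Dq_def)
  have A: "A = C\<^sub>\<Sigma> * Kp * E * Dq" unfolding A_def Kp_def Dq_def ..
  show "A \<in> carrier_mat (M*N) (M*N)" unfolding A n_def[symmetric] using CS Kp E Dq(1) by (meson mult_carrier_mat)
  have "A * transpose_mat A = C\<^sub>\<Sigma> * (Kp * (E * (Dq * transpose_mat Dq) * transpose_mat E) * transpose_mat Kp) * transpose_mat C\<^sub>\<Sigma>"
    unfolding A using CS Kp E Dq(1)
    by (simp add: transpose_mult[of _ n n _ n] assoc_mult_mat[of _ n n _ n _ n])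
  also have "\<dots> = C\<^sub>\<Sigma> * (Kp * kron R K * transpose_mat Kp) * transpose_mat C\<^sub>\<Sigma>"
    unfolding Dq(2) EL ..
  also have "\<dots> = \<Sigma>" unfolding sand S using CS by simp
  finally show "A * transpose_mat A = \<Sigma>" .
qed


lemma quad_form:
  assumes "M \<in> carrier_mat n n"
  shows "vec n x \<bullet> (M *\<^sub>v vec n x) = (\<Sum>i\<in>{0..<n}. x i * (\<Sum>j\<in>{0..<n}. M $$ (i,j) * x j))"
  using assms by (simp add: scalar_prod_def)

lemma quad_measurable:
  assumes "M \<in> carrier_mat n n"
  shows "(\<lambda>x. vec n x \<bullet> (M *\<^sub>v vec n x)) \<in> borel_measurable (Rn n)"
  unfolding quad_form[OF assms] by measurable

lemma powr_sq_half: "d \<noteq> (0::real) \<Longrightarrow> (d * d) powr (- 1 / 2) = 1 / \<bar>d\<bar>"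
proof -
  assume "d \<noteq> 0"
  have "(d * d) powr (- 1 / 2) = (d * d) powr (- (1 / 2))" by simp
  also have "\<dots> = inverse ((d * d) powr (1/2))" by (rule powr_minus)
  also have "(d * d) powr (1/2) = sqrt (d * d)" by (rule powr_half_sqrt) simp
  also have "sqrt (d * d) = \<bar>d\<bar>" by (metis real_sqrt_abs power2_eq_square)
  finally show ?thesis by (simp only: inverse_eq_divide)
qed

lemma mvnormal_linear:
  fixes A \<Sigma> :: "real mat" and \<epsilon> :: "'a \<Rightarrow> nat \<Rightarrow> real"
  assumes A: "A \<in> carrier_mat n n" and dA: "det A \<noteq> 0" and S: "\<Sigma> = A * transpose_mat A"
    and eps: "\<epsilon> \<in> measurable \<Omega> (Rn n)" and d: "distr \<Omega> (Rn n) \<epsilon> = mvnormal n (1\<^sub>m n)"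
  shows "distr \<Omega> (Rn n) (\<lambda>\<omega>. mat_app n A (\<epsilon> \<omega>)) = mvnormal n \<Sigma>"
proof -
  obtain B where B: "B \<in> carrier_mat n n" "A * B = 1\<^sub>m n" "B * A = 1\<^sub>m n"
    using inv_exists[OF A dA] by blast
  have Sc: "\<Sigma> \<in> carrier_mat n n" using S A by simp
  have ATBT: "transpose_mat A * transpose_mat B = 1\<^sub>m n"
    using transpose_mult[OF B(1) A, symmetric] B(3) by simp
  have BTAT: "transpose_mat B * transpose_mat A = 1\<^sub>m n"
    using transpose_mult[OF A B(1), symmetric] B(2) by simp
  have At: "transpose_mat A \<in> carrier_mat n n" and Bt: "transpose_mat B \<in> carrier_mat n n" using A B(1) by auto
  have "\<Sigma> * (transpose_mat B * B) = A * (transpose_mat A * (transpose_mat B * B))"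
    unfolding S by (rule assoc_mult_mat[OF A At mult_carrier_mat[OF Bt B(1)]])
  also have "transpose_mat A * (transpose_mat B * B) = (transpose_mat A * transpose_mat B) * B"
    by (rule assoc_mult_mat[OF At Bt B(1), symmetric])
  also have "\<dots> = B" unfolding ATBT using B(1) by simp
  finally have s1: "\<Sigma> * (transpose_mat B * B) = 1\<^sub>m n" using B(2) by simp
  have "(transpose_mat B * B) * \<Sigma> = transpose_mat B * (B * (A * transpose_mat A))"
    unfolding S by (rule assoc_mult_mat[OF Bt B(1) mult_carrier_mat[OF A At]])
  also have "B * (A * transpose_mat A) = (B * A) * transpose_mat A"
    by (rule assoc_mult_mat[OF B(1) A At, symmetric])
  also have "\<dots> = transpose_mat A" unfolding B(3) using At by simp
  finally have s2: "(transpose_mat B * B) * \<Sigma> = 1\<^sub>m n" using BTAT by simp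
  have mS: "minv \<Sigma> = transpose_mat B * B"
    by (rule minv_eq[OF Sc _ s1 s2]) (use B in simp)
  have mI: "minv (1\<^sub>m n) = (1\<^sub>m n :: real mat)" by (rule minv_eq) auto
  have dS: "det \<Sigma> = det A * det A"
    unfolding S using det_mult[OF A At] det_transpose[OF A] by simp
  define c where "c = (2 * pi) powr (- real n / 2)"
  define g0 where "g0 = (\<lambda>x. ennreal (c * det (1\<^sub>m n :: real mat) powr (- 1 / 2)
       * exp (- (vec n x \<bullet> (minv (1\<^sub>m n) *\<^sub>v vec n x)) / 2)))"
  define gS where "gS = (\<lambda>x. ennreal (c * det \<Sigma> powr (- 1 / 2)
       * exp (- (vec n x \<bullet> (minv \<Sigma> *\<^sub>v vec n x)) / 2)))"
  have N0: "mvnormal n (1\<^sub>m n) = density (Rn n) g0" unfolding mvnormal_def g0_def c_def ..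
  have NS: "mvnormal n \<Sigma> = density (Rn n) gS" unfolding mvnormal_def gS_def c_def ..
  have q0[measurable]: "(\<lambda>x. vec n x \<bullet> (minv (1\<^sub>m n) *\<^sub>v vec n x)) \<in> borel_measurable (Rn n)"
    by (rule quad_measurable) (simp add: mI)
  have qS[measurable]: "(\<lambda>x. vec n x \<bullet> (minv \<Sigma> *\<^sub>v vec n x)) \<in> borel_measurable (Rn n)"
    by (rule quad_measurable) (use B(1) in \<open>simp add: mS\<close>)
  have g0m[measurable]: "g0 \<in> borel_measurable (Rn n)"
    unfolding g0_def by measurable
  have gSm[measurable]: "gS \<in> borel_measurable (Rn n)"
    unfolding gS_def by measurable
  have pw: "gS (mat_app n A x) = ennreal (1/\<bar>det A\<bar>) * g0 x" if x: "x \<in> space (Rn n)" for x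
  proof -
    define v where "v = vec n x"
    have v: "v \<in> carrier_vec n" unfolding v_def by simp
    have vA: "vec n (mat_app n A x) = A *\<^sub>v v"
      unfolding v_def mat_app_def using A by (intro eq_vecI) auto
    have Av: "A *\<^sub>v v \<in> carrier_vec n" using A v by simp
    have BAv: "B *\<^sub>v (A *\<^sub>v v) = v"
      using assoc_mult_mat_vec[OF B(1) A v, symmetric] B(3) v by simp
    have "(A *\<^sub>v v) \<bullet> (minv \<Sigma> *\<^sub>v (A *\<^sub>v v)) = (A *\<^sub>v v) \<bullet> (transpose_mat B *\<^sub>v (B *\<^sub>v (A *\<^sub>v v)))"
      unfolding mS using assoc_mult_mat_vec[OF Bt B(1) Av] by simp
    also have "\<dots> = (transpose_mat B *\<^sub>v v) \<bullet> (A *\<^sub>v v)"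
      unfolding BAv by (rule comm_scalar_prod[of _ n]) (use Av Bt v in auto)
    also have "\<dots> = v \<bullet> v"
      using transpose_vec_mult_scalar[OF B(1) Av v] BAv by simp
    finally have q: "(A *\<^sub>v v) \<bullet> (minv \<Sigma> *\<^sub>v (A *\<^sub>v v)) = v \<bullet> v" .
    have q0: "v \<bullet> (minv (1\<^sub>m n) *\<^sub>v v) = v \<bullet> v" unfolding mI using v by simp
    have dpos: "\<bar>det A\<bar> > 0" using dA by simp
    have dp: "det \<Sigma> powr (- 1 / 2) = 1 / \<bar>det A\<bar>" unfolding dS by (rule powr_sq_half[OF dA])
    have cpos: "c \<ge> 0" unfolding c_def by simp
    show ?thesis
      unfolding gS_def g0_def vA q dp v_def[symmetric] q0
      using cpos dpos by (simp add: ennreal_mult[symmetric] mult_ac)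
  qed
  have "distr \<Omega> (Rn n) (\<lambda>\<omega>. mat_app n A (\<epsilon> \<omega>)) = distr (distr \<Omega> (Rn n) \<epsilon>) (Rn n) (mat_app n A)"
    using distr_distr[OF mat_app_measurable[OF A] eps] by (simp add: o_def)
  also have "\<dots> = distr (density (Rn n) g0) (Rn n) (mat_app n A)" unfolding d N0 ..
  also have "\<dots> = density (Rn n) gS"
  proof (rule measure_eqI)
    show "sets (distr (density (Rn n) g0) (Rn n) (mat_app n A)) = sets (density (Rn n) gS)" by simp
    fix S assume "S \<in> sets (distr (density (Rn n) g0) (Rn n) (mat_app n A))"
    then have S[measurable]: "S \<in> sets (Rn n)" by simp
    have pre[measurable]: "mat_app n A -` S \<inter> space (Rn n) \<in> sets (Rn n)"
      using measurable_sets[OF mat_app_measurable[OF A] S] .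
    have fm: "(\<lambda>y. gS y * indicator S y) \<in> borel_measurable (Rn n)" by measurable
    have "emeasure (distr (density (Rn n) g0) (Rn n) (mat_app n A)) S
        = emeasure (density (Rn n) g0) (mat_app n A -` S \<inter> space (Rn n))"
      by (subst emeasure_distr) (use A S in auto)
    also have "\<dots> = (\<integral>\<^sup>+x. g0 x * indicator (mat_app n A -` S \<inter> space (Rn n)) x \<partial>Rn n)"
      by (rule emeasure_density) (use pre in auto)
    finally have e1: "emeasure (distr (density (Rn n) g0) (Rn n) (mat_app n A)) S
        = (\<integral>\<^sup>+x. g0 x * indicator (mat_app n A -` S \<inter> space (Rn n)) x \<partial>Rn n)" .
    have e2: "emeasure (density (Rn n) gS) S = (\<integral>\<^sup>+y. gS y * indicator S y \<partial>Rn n)"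
      by (rule emeasure_density) auto
    have "ennreal (1/\<bar>det A\<bar>) * (\<integral>\<^sup>+y. gS y * indicator S y \<partial>Rn n)
       = (\<integral>\<^sup>+x. gS (mat_app n A x) * indicator S (mat_app n A x) \<partial>Rn n)"
      using change_of_vars[OF A dA fm] by simp
    also have "\<dots> = (\<integral>\<^sup>+x. ennreal (1/\<bar>det A\<bar>) * (g0 x * indicator (mat_app n A -` S \<inter> space (Rn n)) x) \<partial>Rn n)"
      by (rule nn_integral_cong) (auto simp: pw mult_ac indicator_def)
    also have "\<dots> = ennreal (1/\<bar>det A\<bar>) * (\<integral>\<^sup>+x. g0 x * indicator (mat_app n A -` S \<inter> space (Rn n)) x \<partial>Rn n)"
      by (rule nn_integral_cmult) measurable
    finally have "ennreal (1/\<bar>det A\<bar>) * (\<integral>\<^sup>+y. gS y * indicator S y \<partial>Rn n)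
       = ennreal (1/\<bar>det A\<bar>) * (\<integral>\<^sup>+x. g0 x * indicator (mat_app n A -` S \<inter> space (Rn n)) x \<partial>Rn n)" .
    then have "(\<integral>\<^sup>+y. gS y * indicator S y \<partial>Rn n) = (\<integral>\<^sup>+x. g0 x * indicator (mat_app n A -` S \<inter> space (Rn n)) x \<partial>Rn n)"
      using dA by (simp add: ennreal_mult_cancel_left)
    then show "emeasure (distr (density (Rn n) g0) (Rn n) (mat_app n A)) S = emeasure (density (Rn n) gS) S"
      using e1 e2 by simp
  qed
  also have "\<dots> = mvnormal n \<Sigma>" unfolding NS ..
  finally show ?thesis .
qed


theorem mainTheorem1:
  fixes M N :: nat and t :: "nat \<Rightarrow> real"
    and \<Sigma> K C\<^sub>\<Sigma> C\<^sub>R C\<^sub>K E \<Lambda> :: "real mat"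
    and \<Omega> :: "'a measure" and \<epsilon> :: "'a \<Rightarrow> nat \<Rightarrow> real"
  assumes "M \<ge> 1" and "N \<ge> 1"
    and "0 < t 0" and "\<And>l. Suc l < N \<Longrightarrow> t l < t (Suc l)"
    and "sym_pos_def (M * N) \<Sigma>" and "sym_pos_def M K"
    and "is_cholesky (M * N) C\<^sub>\<Sigma> \<Sigma>"
    and "is_cholesky N C\<^sub>R (min_mat N t)"
    and "is_cholesky M C\<^sub>K K"
    and "is_eigendecomp (N * M) (kron (min_mat N t) K) E \<Lambda>"
    and "prob_space \<Omega>"
    and "\<epsilon> \<in> measurable \<Omega> (Rn (M * N))"
    and "distr \<Omega> (Rn (M * N)) \<epsilon> = mvnormal (M * N) (1\<^sub>m (M * N))"
  shows "distr \<Omega> (Rn (M * N))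
           (\<lambda>\<omega>. mat_app (M * N)
                 (C\<^sub>\<Sigma> * kron (minv C\<^sub>R) (minv C\<^sub>K) * E * diag_sqrt \<Lambda>) (\<epsilon> \<omega>))
         = mvnormal (M * N) \<Sigma>"
proof -
  note alg = main_alg[OF assms(7) assms(8) assms(9) assms(10)]
  define A where "A = C\<^sub>\<Sigma> * kron (minv C\<^sub>R) (minv C\<^sub>K) * E * diag_sqrt \<Lambda>"
  have Ac: "A \<in> carrier_mat (M*N) (M*N)" and AA: "A * transpose_mat A = \<Sigma>" using alg unfolding A_def by auto
  have CS: "C\<^sub>\<Sigma> \<in> carrier_mat (M*N) (M*N)" and S: "\<Sigma> = C\<^sub>\<Sigma> * transpose_mat C\<^sub>\<Sigma>"
    using assms(7) by (auto simp: is_cholesky_def)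
  have "det \<Sigma> = det C\<^sub>\<Sigma> * det C\<^sub>\<Sigma>"
    unfolding S using det_mult[OF CS transpose_carrier_mat[THEN iffD2, OF CS]] det_transpose[OF CS] by simp
  then have dS: "det \<Sigma> \<noteq> 0" using chol_det[OF assms(7)] by simp
  have "det \<Sigma> = det A * det A"
    unfolding AA[symmetric] using det_mult[OF Ac transpose_carrier_mat[THEN iffD2, OF Ac]] det_transpose[OF Ac] by simp
  then have dA: "det A \<noteq> 0" using dS by auto
  show ?thesis
    using mvnormal_linear[OF Ac dA AA[symmetric] assms(12) assms(13)] unfolding A_def .
qed

end
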